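(* Let $c = 1.40759\ldots$ denote the largest real root of $x^6 - 2x^2 - 2x - 1 = 0$ (note $c < \sqrt{2}$). For all integers $n \ge 1$ and $t$ with $0 \le t \le n/2$, every triangle-free graph $G$ on $n$ vertices that contains no induced matching of size $t+1$ satisfies \[ \mathrm{mis}(G) \le 2^t c^{\,n-2t}. \] That is, $\mathrm{mis}_{\triangle,t}(n) \le 2^t c^{n-2t}$.
   Context: All graphs are finite and simple. For a graph $G$, $\mathrm{mis}(G)$ denotes the number of maximal independent sets of $G$. An induced matching in $G$ is a set of pairwise vertex-disjoint edges of $G$ such that the subgraph induced by their endpoints consists of exactly these edges; its size is the number of edges. $\mathrm{mis}_{\triangle,t}(n)$ denotes the maximum of $\mathrm{mis}(G)$ over all $n$-vertex triangle-free graphs $G$ containing no induced matching of size $t+1$. *)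

theory Defs
  imports Complex_Main
begin

definition simple_graph :: "'a set \<Rightarrow> ('a \<Rightarrow> 'a \<Rightarrow> bool) \<Rightarrow> bool" where
  "simple_graph V E \<longleftrightarrow> finite V \<and> (\<forall>u v. E u v \<longrightarrow> u \<in> V \<and> v \<in> V)
     \<and> (\<forall>u v. E u v \<longrightarrow> E v u) \<and> (\<forall>u. \<not> E u u)"

definition triangle_free :: "'a set \<Rightarrow> ('a \<Rightarrow> 'a \<Rightarrow> bool) \<Rightarrow> bool" where
  "triangle_free V E \<longleftrightarrow> \<not> (\<exists>u\<in>V. \<exists>v\<in>V. \<exists>w\<in>V. E u v \<and> E v w \<and> E u w)"

definition independent_set :: "'a set \<Rightarrow> ('a \<Rightarrow> 'a \<Rightarrow> bool) \<Rightarrow> 'a set \<Rightarrow> bool" where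
  "independent_set V E S \<longleftrightarrow> S \<subseteq> V \<and> (\<forall>u\<in>S. \<forall>v\<in>S. \<not> E u v)"

definition maximal_independent_set :: "'a set \<Rightarrow> ('a \<Rightarrow> 'a \<Rightarrow> bool) \<Rightarrow> 'a set \<Rightarrow> bool" where
  "maximal_independent_set V E S \<longleftrightarrow> independent_set V E S
     \<and> (\<forall>T. independent_set V E T \<and> S \<subseteq> T \<longrightarrow> T = S)"

definition mis :: "'a set \<Rightarrow> ('a \<Rightarrow> 'a \<Rightarrow> bool) \<Rightarrow> nat" where
  "mis V E = card {S. maximal_independent_set V E S}"

definition graph_edges :: "'a set \<Rightarrow> ('a \<Rightarrow> 'a \<Rightarrow> bool) \<Rightarrow> 'a set set" where
  "graph_edges V E = {{u, v} | u v. u \<in> V \<and> v \<in> V \<and> E u v}"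

definition induced_matching :: "'a set \<Rightarrow> ('a \<Rightarrow> 'a \<Rightarrow> bool) \<Rightarrow> 'a set set \<Rightarrow> bool" where
  "induced_matching V E M \<longleftrightarrow> M \<subseteq> graph_edges V E
     \<and> (\<forall>e\<in>M. \<forall>f\<in>M. e \<noteq> f \<longrightarrow> e \<inter> f = {})
     \<and> (\<forall>u\<in>\<Union>M. \<forall>v\<in>\<Union>M. E u v \<longrightarrow> {u, v} \<in> M)"

definition c_const :: real where
  "c_const = Max {x :: real. x ^ 6 - 2 * x ^ 2 - 2 * x - 1 = 0}"

end

theory Submission
  imports Defs "HOL-Computational_Algebra.Polynomial"
begin


lemma poly_eq: "poly ([:-1, -2, -2, 0, 0, 0, 1:] :: real poly) x = x ^ 6 - 2 * x ^ 2 - 2 * x - 1"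
  by (simp add: algebra_simps eval_nat_numeral)

lemma root_set_finite: "finite {x :: real. x ^ 6 - 2 * x ^ 2 - 2 * x - 1 = 0}"
proof -
  let ?p = "[:-1, -2, -2, 0, 0, 0, 1:] :: real poly"
  have "?p \<noteq> 0" by simp
  hence "finite {x. poly ?p x = 0}" by (rule poly_roots_finite)
  thus ?thesis unfolding poly_eq .
qed

lemma exists_root: "\<exists>x::real. 1.4 \<le> x \<and> x \<le> 1.42 \<and> x ^ 6 - 2 * x ^ 2 - 2 * x - 1 = 0"
  by (rule IVT[of "\<lambda>x::real. x ^ 6 - 2 * x ^ 2 - 2 * x - 1"]) (auto intro!: continuous_intros simp: power_divide)

lemma root_sq_le: assumes "(x::real) ^ 6 - 2 * x ^ 2 - 2 * x - 1 = 0" shows "x ^ 2 \<le> 2"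
proof (rule ccontr)
  assume "\<not> x^2 \<le> 2"
  hence h: "x^2 > 2" by simp
  have h4: "(x^2)^2 > 2 * 2" using mult_strict_mono[OF h h] h by (simp add: power2_eq_square)
  have "(x^2)^2 * x^2 > 4 * x^2" using h h4 by (intro mult_strict_right_mono) auto
  hence six: "x^6 > 4 * x^2" by (simp add: eval_nat_numeral)
  show False
  proof (cases "x > 0")
    case True
    have "x > 1.4" proof (rule ccontr)
      assume "\<not> x > 1.4" hence "x \<le> 1.4" by simp
      hence "x^2 \<le> 1.4^2" using True by (intro power_mono) auto
      thus False using h by (simp add: power2_eq_square)
    qed
    hence "x * (x - 1) > 1.4 * 0.4" by (intro mult_strict_mono) auto
    thus False using assms six by (simp add: power2_eq_square algebra_simps)
  next
    case False
    thus False using assms six h by linarith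
  qed
qed

lemma c_bounds: "1.4 \<le> c_const" "c_const ^ 2 \<le> 2"
proof -
  obtain r :: real where r: "1.4 \<le> r" "r ^ 6 - 2 * r ^ 2 - 2 * r - 1 = 0" using exists_root by blast
  have ne: "{x :: real. x ^ 6 - 2 * x ^ 2 - 2 * x - 1 = 0} \<noteq> {}" using r by blast
  have "r \<le> c_const" unfolding c_const_def using root_set_finite r by (intro Max_ge) auto
  thus "1.4 \<le> c_const" using r by simp
  have "c_const \<in> {x :: real. x ^ 6 - 2 * x ^ 2 - 2 * x - 1 = 0}"
    unfolding c_const_def using root_set_finite ne by (rule Max_in)
  thus "c_const ^ 2 \<le> 2" using root_sq_le by simp
qed



definition rs :: "('a \<Rightarrow> 'a \<Rightarrow> bool) \<Rightarrow> 'a set \<Rightarrow> 'a \<Rightarrow> 'a \<Rightarrow> bool" where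
  "rs E W = (\<lambda>a b. E a b \<and> a \<in> W \<and> b \<in> W)"

definition nb :: "('a \<Rightarrow> 'a \<Rightarrow> bool) \<Rightarrow> 'a \<Rightarrow> 'a set" where
  "nb E x = {y. E x y}"

lemma sg_rs: "simple_graph V E \<Longrightarrow> W \<subseteq> V \<Longrightarrow> simple_graph W (rs E W)"
proof -
  assume g: "simple_graph V E" and W: "W \<subseteq> V"
  have "finite W" using g W finite_subset unfolding simple_graph_def by blast
  thus ?thesis using g unfolding simple_graph_def rs_def by simp
qed

lemma tf_rs: "triangle_free V E \<Longrightarrow> W \<subseteq> V \<Longrightarrow> triangle_free W (rs E W)"
  unfolding triangle_free_def rs_def by blast

lemma rs_rs: "W' \<subseteq> W \<Longrightarrow> rs (rs E W) W' = rs E W'"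
  unfolding rs_def by (auto simp: fun_eq_iff)

lemma nb_sub: "simple_graph V E \<Longrightarrow> nb E x \<subseteq> V"
  unfolding simple_graph_def nb_def by auto

lemma nb_fin: "simple_graph V E \<Longrightarrow> finite (nb E x)"
proof -
  assume g: "simple_graph V E"
  hence "finite V" unfolding simple_graph_def by simp
  thus ?thesis using finite_subset[OF nb_sub[OF g]] by simp
qed

lemma ge_rs: "W \<subseteq> V \<Longrightarrow> graph_edges W (rs E W) \<subseteq> graph_edges V E"
  unfolding graph_edges_def rs_def by blast

lemma ge_rs_sub: "\<Union>(graph_edges W (rs E W)) \<subseteq> W"
  unfolding graph_edges_def rs_def by blast

lemma im_union_sub: "induced_matching W (rs E W) M \<Longrightarrow> \<Union>M \<subseteq> W"
proof -
  assume "induced_matching W (rs E W) M"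
  hence "M \<subseteq> graph_edges W (rs E W)" unfolding induced_matching_def by simp
  hence "\<Union>M \<subseteq> \<Union>(graph_edges W (rs E W))" by (rule Union_mono)
  thus ?thesis using ge_rs_sub by (rule order_trans)
qed

lemma im_mono: "W \<subseteq> V \<Longrightarrow> induced_matching W (rs E W) M \<Longrightarrow> induced_matching V E M"
proof -
  assume WV: "W \<subseteq> V" and M: "induced_matching W (rs E W) M"
  have U: "\<Union>M \<subseteq> W" using im_union_sub[OF M] .
  have "M \<subseteq> graph_edges W (rs E W)" using M unfolding induced_matching_def by simp
  hence 1: "M \<subseteq> graph_edges V E" using ge_rs[OF WV, of E] by (rule order_trans)
  have 2: "\<forall>e\<in>M. \<forall>f\<in>M. e \<noteq> f \<longrightarrow> e \<inter> f = {}" using M unfolding induced_matching_def by simp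
  have 3: "\<forall>u\<in>\<Union>M. \<forall>v\<in>\<Union>M. rs E W u v \<longrightarrow> {u, v} \<in> M" using M unfolding induced_matching_def by simp
  have "\<forall>u\<in>\<Union>M. \<forall>v\<in>\<Union>M. E u v \<longrightarrow> {u, v} \<in> M"
  proof (intro ballI impI)
    fix u v assume u: "u \<in> \<Union>M" and v: "v \<in> \<Union>M" and e: "E u v"
    have "rs E W u v" using u v U e unfolding rs_def by blast
    thus "{u, v} \<in> M" using 3 u v by blast
  qed
  thus ?thesis using 1 2 unfolding induced_matching_def by simp
qed

lemma im_ext:
  assumes g: "simple_graph V E" and xy: "E x y"
    and W: "W \<subseteq> V - (insert x (nb E x) \<union> insert y (nb E y))"
    and M: "induced_matching W (rs E W) M" and fin: "finite M"
  shows "induced_matching V E (insert {x,y} M) \<and> card (insert {x,y} M) = card M + 1"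
proof -
  have U: "\<Union>M \<subseteq> W" using im_union_sub[OF M] .
  have xV: "x \<in> V" "y \<in> V" using g xy unfolding simple_graph_def by auto
  have xW: "x \<notin> W" "y \<notin> W" using W by auto
  have notin: "{x,y} \<notin> M" using U xW by blast
  have sym: "\<And>a b. E a b \<Longrightarrow> E b a" and irr: "\<And>a. \<not> E a a"
    using g unfolding simple_graph_def by auto
  have nbx: "\<And>v. v \<in> W \<Longrightarrow> \<not> E x v" "\<And>v. v \<in> W \<Longrightarrow> \<not> E y v"
    using W unfolding nb_def by auto
  have "induced_matching V E (insert {x,y} M)"
    unfolding induced_matching_def
  proof (intro conjI)
    show "insert {x, y} M \<subseteq> graph_edges V E"
    proof -
      have WV: "W \<subseteq> V" using W by blast
      have "induced_matching V E M" by (rule im_mono[OF WV M])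
      hence "M \<subseteq> graph_edges V E" unfolding induced_matching_def by simp
      moreover have "{x,y} \<in> graph_edges V E" using xV xy unfolding graph_edges_def by blast
      ultimately show ?thesis by blast
    qed
    show "\<forall>e\<in>insert {x, y} M. \<forall>f\<in>insert {x, y} M. e \<noteq> f \<longrightarrow> e \<inter> f = {}"
    proof (intro ballI impI)
      fix e f assume e: "e \<in> insert {x, y} M" and f: "f \<in> insert {x, y} M" and ne: "e \<noteq> f"
      have d: "\<forall>e\<in>M. \<forall>f\<in>M. e \<noteq> f \<longrightarrow> e \<inter> f = {}" using M unfolding induced_matching_def by simp
      have s: "\<And>g. g \<in> M \<Longrightarrow> g \<inter> {x,y} = {}" using U xW by blast
      show "e \<inter> f = {}"
      proof (cases "e = {x,y}")
        case True
        hence "f \<in> M" using f ne by auto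
        thus ?thesis using s True by blast
      next
        case False
        hence eM: "e \<in> M" using e by auto
        show ?thesis
        proof (cases "f = {x,y}")
          case True thus ?thesis using s eM by blast
        next
          case False thus ?thesis using f eM d ne by auto
        qed
      qed
    qed
    show "\<forall>u\<in>\<Union> (insert {x, y} M). \<forall>v\<in>\<Union> (insert {x, y} M). E u v \<longrightarrow> {u, v} \<in> insert {x, y} M"
    proof (intro ballI impI)
      fix u v assume u: "u \<in> \<Union> (insert {x, y} M)" and v: "v \<in> \<Union> (insert {x, y} M)" and e: "E u v"
      show "{u, v} \<in> insert {x, y} M"
      proof (cases "u \<in> \<Union>M")
        case True
        hence uW: "u \<in> W" using U by auto
        show ?thesis
        proof (cases "v \<in> \<Union>M")
          case True
          hence "rs E W u v" using uW U e unfolding rs_def by auto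
          moreover have im3: "\<forall>u\<in>\<Union>M. \<forall>v\<in>\<Union>M. rs E W u v \<longrightarrow> {u, v} \<in> M"
            using M unfolding induced_matching_def by simp
          ultimately have "{u,v} \<in> M" using True \<open>u \<in> \<Union>M\<close> by blast
          thus ?thesis by simp
        next
          case False
          hence "v = x \<or> v = y" using v by auto
          moreover have "E v u" using sym e .
          ultimately have False using nbx(1)[OF uW] nbx(2)[OF uW] by blast
          thus ?thesis ..
        qed
      next
        case False
        hence ux: "u = x \<or> u = y" using u by auto
        show ?thesis
        proof (cases "v \<in> \<Union>M")
          case True
          hence "v \<in> W" using U by auto
          hence False using nbx(1)[OF \<open>v \<in> W\<close>] nbx(2)[OF \<open>v \<in> W\<close>] ux e by blast
          thus ?thesis ..
        next
          case False
          hence "v = x \<or> v = y" using v by auto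
          thus ?thesis using ux e irr by (auto simp: insert_commute)
        qed
      qed
    qed
  qed
  moreover have "card (insert {x,y} M) = card M + 1" using fin notin by simp
  ultimately show ?thesis by blast
qed

lemma noIM_sub:
  assumes "\<not> (\<exists>M. induced_matching V E M \<and> card M = t + 1)" "W \<subseteq> V"
  shows "\<not> (\<exists>M. induced_matching W (rs E W) M \<and> card M = t + 1)"
proof
  assume "\<exists>M. induced_matching W (rs E W) M \<and> card M = t + 1"
  then obtain M where M: "induced_matching W (rs E W) M" "card M = t + 1" by blast
  have "induced_matching V E M" by (rule im_mono[OF assms(2) M(1)])
  with M(2) assms(1) show False by blast
qed

lemma noIM_edge:
  assumes g: "simple_graph V E" and xy: "E x y"
    and W: "W \<subseteq> V - (insert x (nb E x) \<union> insert y (nb E y))"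
    and n: "\<not> (\<exists>M. induced_matching V E M \<and> card M = Suc t + 1)"
  shows "\<not> (\<exists>M. induced_matching W (rs E W) M \<and> card M = t + 1)"
proof
  assume "\<exists>M. induced_matching W (rs E W) M \<and> card M = t + 1"
  then obtain M where M: "induced_matching W (rs E W) M" "card M = t + 1" by blast
  have "finite M" using M(2) by (intro card_ge_0_finite) simp
  from im_ext[OF g xy W M(1) this] M(2)
  have "induced_matching V E (insert {x,y} M) \<and> card (insert {x,y} M) = Suc t + 1" by simp
  with n show False by blast
qed

lemma t_pos:
  assumes g: "simple_graph V E" and xy: "E x y"
    and n: "\<not> (\<exists>M. induced_matching V E M \<and> card M = t + 1)"
  shows "t \<noteq> 0"
proof
  assume t: "t = 0"
  have "induced_matching {} (rs E {}) {}" unfolding induced_matching_def graph_edges_def by simp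
  have e: "{} \<subseteq> V - (insert x (nb E x) \<union> insert y (nb E y))" by simp
  have "induced_matching V E (insert {x,y} {}) \<and> card (insert {x,y} {}) = card {} + 1"
    using im_ext[OF g xy e \<open>induced_matching {} (rs E {}) {}\<close> finite.emptyI] by simp
  hence "induced_matching V E {{x,y}} \<and> card {{x,y}} = t + 1" using t by simp
  with n show False by blast
qed



lemma indep_rs: "W \<subseteq> V \<Longrightarrow> independent_set W (rs E W) T \<longleftrightarrow> T \<subseteq> W \<and> independent_set V E T"
  unfolding independent_set_def rs_def by blast

lemma fin_mis: "simple_graph V E \<Longrightarrow> finite {S. maximal_independent_set V E S}"
proof -
  assume g: "simple_graph V E"
  hence "finite (Pow V)" unfolding simple_graph_def by simp
  moreover have "{S. maximal_independent_set V E S} \<subseteq> Pow V"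
    unfolding maximal_independent_set_def independent_set_def by blast
  ultimately show ?thesis by (rule finite_subset[rotated])
qed

lemma mis_out:
  assumes g: "simple_graph V E"
  shows "card {S. maximal_independent_set V E S \<and> x \<notin> S} \<le> mis (V - {x}) (rs E (V - {x}))"
proof -
  let ?W = "V - {x}"
  have WV: "?W \<subseteq> V" by blast
  have "{S. maximal_independent_set V E S \<and> x \<notin> S} \<subseteq> {S. maximal_independent_set ?W (rs E ?W) S}"
  proof
    fix S assume "S \<in> {S. maximal_independent_set V E S \<and> x \<notin> S}"
    hence S: "independent_set V E S" "\<forall>T. independent_set V E T \<and> S \<subseteq> T \<longrightarrow> T = S" "x \<notin> S"
      unfolding maximal_independent_set_def by auto
    have SW: "S \<subseteq> ?W" using S(1,3) unfolding independent_set_def by blast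
    have "independent_set ?W (rs E ?W) S" using indep_rs[OF WV] SW S(1) by blast
    moreover have "\<forall>T. independent_set ?W (rs E ?W) T \<and> S \<subseteq> T \<longrightarrow> T = S"
      using indep_rs[OF WV] S(2) by blast
    ultimately show "S \<in> {S. maximal_independent_set ?W (rs E ?W) S}"
      unfolding maximal_independent_set_def by blast
  qed
  moreover have "finite {S. maximal_independent_set ?W (rs E ?W) S}"
    using fin_mis sg_rs[OF g WV] by blast
  ultimately show ?thesis unfolding mis_def by (rule card_mono[rotated])
qed

lemma mis_in:
  assumes g: "simple_graph V E"
  shows "card {S. maximal_independent_set V E S \<and> x \<in> S}
     \<le> mis (V - insert x (nb E x)) (rs E (V - insert x (nb E x)))"
proof -
  let ?W = "V - insert x (nb E x)"
  have WV: "?W \<subseteq> V" by blast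
  have sym: "\<And>a b. E a b \<Longrightarrow> E b a" using g unfolding simple_graph_def by blast
  have "inj_on (\<lambda>S. S - {x}) {S. maximal_independent_set V E S \<and> x \<in> S}"
    by (rule inj_onI) (metis (mono_tags, lifting) insert_Diff mem_Collect_eq)
  moreover have "(\<lambda>S. S - {x}) ` {S. maximal_independent_set V E S \<and> x \<in> S}
      \<subseteq> {S. maximal_independent_set ?W (rs E ?W) S}"
  proof
    fix S' assume "S' \<in> (\<lambda>S. S - {x}) ` {S. maximal_independent_set V E S \<and> x \<in> S}"
    then obtain S where S': "S' = S - {x}" and SS: "maximal_independent_set V E S" "x \<in> S" by blast
    hence S: "independent_set V E S" "\<forall>T. independent_set V E T \<and> S \<subseteq> T \<longrightarrow> T = S"
      unfolding maximal_independent_set_def by auto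
    have SV: "S \<subseteq> V" and Si: "\<forall>u\<in>S. \<forall>v\<in>S. \<not> E u v" using S(1) unfolding independent_set_def by auto
    have SW: "S - {x} \<subseteq> ?W" using SV Si SS(2) unfolding nb_def by blast
    have "independent_set V E (S - {x})" using S(1) unfolding independent_set_def by blast
    hence i1: "independent_set ?W (rs E ?W) (S - {x})" using indep_rs[OF WV] SW by blast
    have "\<forall>T. independent_set ?W (rs E ?W) T \<and> S - {x} \<subseteq> T \<longrightarrow> T = S - {x}"
    proof (intro allI impI)
      fix T assume T: "independent_set ?W (rs E ?W) T \<and> S - {x} \<subseteq> T"
      hence TW: "T \<subseteq> ?W" and Ti: "independent_set V E T" using indep_rs[OF WV] by blast+
      have "independent_set V E (insert x T)"
      proof -
        have irr: "\<not> E x x" using g unfolding simple_graph_def by blast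
        have "\<And>v. v \<in> T \<Longrightarrow> \<not> E x v" using TW unfolding nb_def by blast
        thus ?thesis using Ti SV SS(2) sym irr unfolding independent_set_def by blast
      qed
      moreover have "S \<subseteq> insert x T" using T by blast
      ultimately have "insert x T = S" using S(2) by blast
      moreover have "x \<notin> T" using TW by blast
      ultimately show "T = S - {x}" by blast
    qed
    thus "S' \<in> {S. maximal_independent_set ?W (rs E ?W) S}"
      using i1 S' unfolding maximal_independent_set_def by blast
  qed
  moreover have "finite {S. maximal_independent_set ?W (rs E ?W) S}"
    using fin_mis sg_rs[OF g WV] by blast
  ultimately show ?thesis unfolding mis_def by (rule card_inj_on_le)
qed

lemma mis_split:
  assumes g: "simple_graph V E"
  shows "mis V E \<le> mis (V - {x}) (rs E (V - {x}))
     + mis (V - insert x (nb E x)) (rs E (V - insert x (nb E x)))"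
proof -
  have "{S. maximal_independent_set V E S} = {S. maximal_independent_set V E S \<and> x \<in> S}
      \<union> {S. maximal_independent_set V E S \<and> x \<notin> S}" by blast
  hence "mis V E \<le> card {S. maximal_independent_set V E S \<and> x \<in> S}
      + card {S. maximal_independent_set V E S \<and> x \<notin> S}"
    unfolding mis_def by (metis card_Un_le)
  thus ?thesis using mis_in[OF g, of x] mis_out[OF g, of x] by linarith
qed

lemma mis_leaf:
  assumes g: "simple_graph V E" and u: "nb E u = {w}"
  shows "mis V E \<le> mis (V - insert u (nb E u)) (rs E (V - insert u (nb E u)))
     + mis (V - insert w (nb E w)) (rs E (V - insert w (nb E w)))"
proof -
  have sym: "\<And>a b. E a b \<Longrightarrow> E b a" using g unfolding simple_graph_def by blast
  have "w \<in> nb E u" using u by simp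
  hence uw: "E u w" unfolding nb_def by simp
  hence uV: "u \<in> V" using g unfolding simple_graph_def by blast
  have key: "u \<in> S \<or> w \<in> S" if S: "maximal_independent_set V E S" for S
  proof (rule ccontr)
    assume n: "\<not> (u \<in> S \<or> w \<in> S)"
    have S1: "independent_set V E S" "\<forall>T. independent_set V E T \<and> S \<subseteq> T \<longrightarrow> T = S"
      using S unfolding maximal_independent_set_def by auto
    have nE: "v = w" if "E u v" for v
    proof -
      have "v \<in> nb E u" using that by (simp add: nb_def)
      with u show ?thesis by simp
    qed
    have nE2: "\<not> E u v" if "v \<in> S" for v using nE n that by blast
    have nE3: "\<not> E v u" if "v \<in> S" for v using nE2[OF that] sym by blast
    have "independent_set V E (insert u S)"
    proof -
      have "\<not> E u u" using g unfolding simple_graph_def by blast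
      thus ?thesis using S1(1) uV nE2 nE3 unfolding independent_set_def by (simp add: Ball_def)
    qed
    hence "insert u S = S" using S1(2) by blast
    thus False using n by blast
  qed
  have fin: "finite {S. maximal_independent_set V E S}" using fin_mis[OF g] .
  have "{S. maximal_independent_set V E S} \<subseteq> {S. maximal_independent_set V E S \<and> u \<in> S}
      \<union> {S. maximal_independent_set V E S \<and> w \<in> S}" using key by blast
  hence "mis V E \<le> card ({S. maximal_independent_set V E S \<and> u \<in> S}
      \<union> {S. maximal_independent_set V E S \<and> w \<in> S})"
    unfolding mis_def by (rule card_mono[rotated]) (use fin in auto)
  also have "\<dots> \<le> card {S. maximal_independent_set V E S \<and> u \<in> S}
      + card {S. maximal_independent_set V E S \<and> w \<in> S}" by (rule card_Un_le)
  finally show ?thesis using mis_in[OF g, of u] mis_in[OF g, of w] by linarith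
qed

lemma mis_edgeless:
  assumes g: "simple_graph V E" and e: "\<forall>u v. \<not> E u v"
  shows "mis V E = 1"
proof -
  have "{S. maximal_independent_set V E S} = {V}"
  proof
    show "{V} \<subseteq> {S. maximal_independent_set V E S}"
      using e unfolding maximal_independent_set_def independent_set_def by blast
    show "{S. maximal_independent_set V E S} \<subseteq> {V}"
    proof
      fix S assume "S \<in> {S. maximal_independent_set V E S}"
      hence "\<forall>T. independent_set V E T \<and> S \<subseteq> T \<longrightarrow> T = S" "S \<subseteq> V"
        unfolding maximal_independent_set_def independent_set_def by auto
      moreover have "independent_set V E V" using e unfolding independent_set_def by blast
      ultimately show "S \<in> {V}" by blast
    qed
  qed
  thus ?thesis unfolding mis_def by simp
qed



definition bd :: "nat \<Rightarrow> nat \<Rightarrow> real" where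
  "bd m t = c_const ^ m * (2 / c_const ^ 2) ^ t"

lemma c_pos: "c_const > 0" using c_bounds(1) by simp
lemma c_ge1: "c_const \<ge> 1" using c_bounds(1) by simp
lemma b_ge1: "2 / c_const ^ 2 \<ge> 1" using c_bounds(2) c_pos by simp
lemma cb: "c_const ^ 2 * (2 / c_const ^ 2) = 2" using c_pos by simp

lemma bd_mono: "m \<le> m' \<Longrightarrow> bd m t \<le> bd m' t"
proof -
  assume "m \<le> m'"
  hence "c_const ^ m \<le> c_const ^ m'" using c_ge1 by (rule power_increasing)
  moreover have "(2 / c_const ^ 2) ^ t \<ge> 0" using c_pos by simp
  ultimately show ?thesis unfolding bd_def by (rule mult_right_mono)
qed

lemma bd_ge1: "1 \<le> bd m t"
proof -
  have "1 \<le> c_const ^ m" using c_ge1 by (rule one_le_power)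
  moreover have "1 \<le> (2 / c_const ^ 2) ^ t" using b_ge1 by (rule one_le_power)
  ultimately have "1 * 1 \<le> c_const ^ m * (2 / c_const ^ 2) ^ t" by (intro mult_mono) auto
  thus ?thesis unfolding bd_def by simp
qed

lemma A1: "bd (m + 3) t + bd m t \<le> bd (m + 4) t"
proof -
  let ?c = c_const
  define P where "P = ?c ^ m * (2 / ?c ^ 2) ^ t"
  have P: "P \<ge> 0" unfolding P_def using c_pos by simp
  have "?c ^ 3 * (?c - 1) \<ge> 1.4 ^ 3 * 0.4"
    using c_bounds(1) by (intro mult_mono power_mono) auto
  hence k: "?c ^ 3 + 1 \<le> ?c ^ 4" by (simp add: algebra_simps power_numeral_reduce)
  have "bd (m + 3) t + bd m t = P * (?c ^ 3 + 1)" unfolding bd_def P_def by (simp add: power_add algebra_simps)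
  also have "\<dots> \<le> P * ?c ^ 4" using P k by (rule mult_left_mono[rotated])
  also have "\<dots> = bd (m + 4) t" unfolding bd_def P_def by (simp add: power_add algebra_simps)
  finally show ?thesis .
qed

lemma A2: "bd m t + bd m t = bd (m + 2) (Suc t)"
proof -
  have "c_const ^ (m + 2) * (2 / c_const ^ 2) ^ Suc t
      = c_const ^ m * (2 / c_const ^ 2) ^ t * (c_const ^ 2 * (2 / c_const ^ 2))"
    by (simp only: power_add power_Suc mult_ac)
  thus ?thesis unfolding bd_def cb by simp
qed

lemma A3: "bd (m + 1) (Suc t) + bd m t \<le> bd (m + 3) (Suc t)"
proof -
  let ?c = c_const and ?b = "2 / c_const ^ 2"
  define P where "P = ?c ^ m * ?b ^ t"
  have P: "P \<ge> 0" unfolding P_def using c_pos by simp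
  have e1: "?c * ?b = 2 / ?c" using c_pos by (simp add: power2_eq_square)
  have e2: "?c ^ 3 * ?b = 2 * ?c" using c_pos by (simp add: power2_eq_square power3_eq_cube)
  have "2 / ?c \<le> 2 / 1.4" using c_bounds(1) by (intro divide_left_mono) auto
  hence k: "?c * ?b + 1 \<le> ?c ^ 3 * ?b" using e1 e2 c_bounds(1) by simp
  have "bd (m + 1) (Suc t) + bd m t = P * (?c * ?b + 1)" unfolding bd_def P_def by (simp add: power_add algebra_simps)
  also have "\<dots> \<le> P * (?c ^ 3 * ?b)" using P k by (rule mult_left_mono[rotated])
  also have "\<dots> = bd (m + 3) (Suc t)" unfolding bd_def P_def by (simp add: power_add algebra_simps)
  finally show ?thesis .
qed

lemma A4: "bd (m + 1) (Suc t) + bd (m + 1) (Suc t) + bd m t \<le> bd (m + 4) (Suc t)"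
proof -
  let ?c = c_const and ?b = "2 / c_const ^ 2"
  define P where "P = ?c ^ m * ?b ^ t"
  have P: "P \<ge> 0" unfolding P_def using c_pos by simp
  have e1: "?c * ?b = 2 / ?c" using c_pos by (simp add: power2_eq_square)
  have e2: "?c ^ 4 * ?b = 2 * ?c ^ 2" using c_pos by (simp add: power2_eq_square power_numeral_reduce)
  have h1: "2 / ?c \<le> 2 / 1.4" using c_bounds(1) by (intro divide_left_mono) auto
  have "?c ^ 2 \<ge> 1.4 ^ 2" using c_bounds(1) by (intro power_mono) auto
  hence h2: "?c ^ 2 \<ge> 1.96" by (simp add: power2_eq_square)
  have k: "2 * (?c * ?b) + 1 \<le> ?c ^ 4 * ?b" unfolding e1 e2 using h1 h2 by simp
  have "bd (m + 1) (Suc t) + bd (m + 1) (Suc t) + bd m t = P * (2 * (?c * ?b) + 1)"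
    unfolding bd_def P_def by (simp add: power_add algebra_simps)
  also have "\<dots> \<le> P * (?c ^ 4 * ?b)" using P k by (rule mult_left_mono[rotated])
  also have "\<dots> = bd (m + 4) (Suc t)" unfolding bd_def P_def by (simp add: power_add algebra_simps)
  finally show ?thesis .
qed

lemma bd_final: "2 * t \<le> n \<Longrightarrow> bd n t = 2 ^ t * c_const ^ (n - 2 * t)"
proof -
  assume "2 * t \<le> n"
  then obtain k where n: "n = 2 * t + k" using le_Suc_ex by blast
  have "bd n t = c_const ^ k * ((c_const ^ 2) ^ t * (2 / c_const ^ 2) ^ t)"
  proof -
    have "c_const ^ n = c_const ^ k * (c_const ^ 2) ^ t" unfolding n power_add power_mult by simp
    thus ?thesis unfolding bd_def by simp
  qed
  also have "\<dots> = c_const ^ k * 2 ^ t" unfolding power_mult_distrib[symmetric] cb ..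
  finally show ?thesis using n by simp
qed



lemma card_rm:
  assumes "finite V" "X \<subseteq> V" "k \<le> card X"
  shows "card (V - X) \<le> card V - k"
  using assms card_Diff_subset[of X V] finite_subset[of X V] by simp

lemma main:
  assumes "simple_graph V E" "triangle_free V E"
    "\<not> (\<exists>M. induced_matching V E M \<and> card M = t + 1)"
  shows "real (mis V E) \<le> bd (card V) t"
  using assms
proof (induction "card V" arbitrary: V E t rule: less_induct)
  case less
  have g: "simple_graph V E" and tf: "triangle_free V E"
    and nI: "\<not> (\<exists>M. induced_matching V E M \<and> card M = t + 1)" using less.prems by auto
  have finV: "finite V" using g unfolding simple_graph_def by simp
  have sym: "\<And>a b. E a b \<Longrightarrow> E b a" and irr: "\<And>a. \<not> E a a"
    and inV: "\<And>a b. E a b \<Longrightarrow> a \<in> V \<and> b \<in> V" using g unfolding simple_graph_def by auto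
  have IHk: "real (mis (V - X) (rs E (V - X))) \<le> bd (card V - k) t0"
    if X: "X \<subseteq> V" "X \<noteq> {}" "k \<le> card X"
      and nI0: "\<not> (\<exists>M. induced_matching (V - X) (rs E (V - X)) M \<and> card M = t0 + 1)" for X k t0
  proof -
    have WV: "V - X \<subseteq> V" by blast
    have "card (V - X) < card V"
      using X(1,2) finV by (metis Diff_subset card_seteq Diff_eq_empty_iff double_diff
          order_refl psubsetI psubset_card_mono subset_refl)
    hence "real (mis (V - X) (rs E (V - X))) \<le> bd (card (V - X)) t0"
      using less.hyps[OF _ sg_rs[OF g WV] tf_rs[OF tf WV] nI0] by blast
    also have "\<dots> \<le> bd (card V - k) t0" using card_rm[OF finV X(1,3)] by (rule bd_mono)
    finally show ?thesis .
  qed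
  have nbV: "\<And>x. nb E x \<subseteq> V" using nb_sub[OF g] .
  have nbf: "\<And>x. finite (nb E x)" using nb_fin[OF g] .
  have xnb: "\<And>x. x \<notin> nb E x" using irr unfolding nb_def by simp
  have nbE: "\<And>x y. y \<in> nb E x \<longleftrightarrow> E x y" unfolding nb_def by simp
  show ?case
  proof (cases "\<exists>u v. E u v")
    case False
    thus ?thesis using mis_edgeless[OF g] bd_ge1 by simp
  next
    case True
    then obtain x0 y0 where xy0: "E x0 y0" by blast
    have tne: "t \<noteq> 0" using t_pos[OF g xy0 nI] .
    then obtain t' where t': "t = Suc t'" using not0_implies_Suc by blast
    show ?thesis
    proof (cases "\<exists>v. 3 \<le> card (nb E v)")
      case True
      then obtain v where v: "3 \<le> card (nb E v)" by blast
      hence "nb E v \<noteq> {}" by auto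
      then obtain y where "E v y" using nbE by blast
      hence vV: "v \<in> V" using inV by blast
      let ?X = "insert v (nb E v)"
      have XV: "?X \<subseteq> V" using vV nbV by blast
      have cX: "card ?X = card (nb E v) + 1" using nbf xnb by simp
      have "real (mis V E) \<le> real (mis (V - {v}) (rs E (V - {v}))) + real (mis (V - ?X) (rs E (V - ?X)))"
        using mis_split[OF g, of v] by linarith
      also have "\<dots> \<le> bd (card V - 1) t + bd (card V - 4) t"
        using IHk[of "{v}" 1 t] IHk[of ?X 4 t] vV XV cX v
          noIM_sub[OF nI, of "V - {v}"] noIM_sub[OF nI, of "V - ?X"]
        by (intro add_mono) auto
      also have "\<dots> \<le> bd (card V) t"
      proof -
        have "4 \<le> card V" using card_mono[OF finV XV] cX v by linarith
        then obtain m where m: "card V = m + 4" using le_Suc_ex by (metis add.commute)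
        thus ?thesis using A1[of m t] by (simp add: m eval_nat_numeral)
      qed
      finally show ?thesis .
    next
      case False
      have deg2: "card (nb E v) \<le> 2" for v
      proof -
        have "\<not> 3 \<le> card (nb E v)" using False by blast
        thus ?thesis by linarith
      qed
      have nI': "\<not> (\<exists>M. induced_matching V E M \<and> card M = Suc t' + 1)" using nI t' by simp
      show ?thesis
      proof (cases "\<exists>u. card (nb E u) = 1")
        case True
        then obtain u where "card (nb E u) = 1" by blast
        then obtain w where u: "nb E u = {w}" using card_1_singletonE by blast
        have uw: "E u w" using u nbE by blast
        have uV: "u \<in> V" and wV: "w \<in> V" using inV[OF uw] by auto
        have uneq: "u \<noteq> w" using uw irr by blast
        have unw: "u \<in> nb E w" using sym[OF uw] nbE by blast
        have ml: "real (mis V E) \<le> real (mis (V - insert u (nb E u)) (rs E (V - insert u (nb E u))))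
            + real (mis (V - insert w (nb E w)) (rs E (V - insert w (nb E w))))"
          using mis_leaf[OF g u] by linarith
        have cw: "card (nb E w) = 1 \<or> card (nb E w) = 2"
          using deg2[of w] unw nbf[of w] by (metis One_nat_def card_0_eq empty_iff le_Suc_eq le_zero_eq numeral_2_eq_2)
        have X1: "insert u (nb E u) = {u, w}" using u by simp
        have cuw: "card {u, w} = 2" using uneq by simp
        have uwV: "{u, w} \<subseteq> V" using uV wV by blast
        show ?thesis
        proof (cases "card (nb E w) = 1")
          case True
          then obtain z where "nb E w = {z}" using card_1_singletonE by blast
          hence w: "nb E w = {u}" using unw by simp
          have X2: "insert w (nb E w) = {u, w}" using w by auto
          have nIs: "\<not> (\<exists>M. induced_matching (V - {u, w}) (rs E (V - {u, w})) M \<and> card M = t' + 1)"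
            by (rule noIM_edge[OF g uw _ nI']) (use X1 X2 in auto)
          have b: "real (mis (V - {u, w}) (rs E (V - {u, w}))) \<le> bd (card V - 2) t'"
            using IHk[OF uwV _ _ nIs] cuw by simp
          have "2 \<le> card V" using card_mono[OF finV uwV] cuw by linarith
          then obtain m where m: "card V = m + 2" using le_Suc_ex by (metis add.commute)
          have "real (mis V E) \<le> bd m t' + bd m t'" using ml b unfolding X1 X2 m by simp
          also have "\<dots> = bd (card V) t" using A2[of m t'] m t' by simp
          finally show ?thesis .
        next
          case False
          hence c2: "card (nb E w) = 2" using cw by simp
          let ?X = "insert w (nb E w)"
          have XV: "?X \<subseteq> V" using wV nbV by blast
          have cX: "card ?X = 3" using nbf xnb c2 by simp
          have nIs: "\<not> (\<exists>M. induced_matching (V - ?X) (rs E (V - ?X)) M \<and> card M = t' + 1)"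
            by (rule noIM_edge[OF g uw _ nI']) (use X1 unw in auto)
          have b2: "real (mis (V - ?X) (rs E (V - ?X))) \<le> bd (card V - 3) t'"
            using IHk[OF XV _ _ nIs] cX by auto
          have b1: "real (mis (V - {u, w}) (rs E (V - {u, w}))) \<le> bd (card V - 2) t"
            using IHk[OF uwV _ _ noIM_sub[OF nI, of "V - {u, w}"]] cuw by auto
          have "3 \<le> card V" using card_mono[OF finV XV] cX by linarith
          then obtain m where m: "card V = m + 3" using le_Suc_ex by (metis add.commute)
          have "real (mis V E) \<le> bd (m + 1) (Suc t') + bd m t'"
            using ml b1 b2 unfolding X1 m t' by simp
          also have "\<dots> \<le> bd (card V) t" using A3[of m t'] m t' by simp
          finally show ?thesis .
        qed
      next
        case False
        hence no1: "\<And>u. card (nb E u) \<noteq> 1" by blast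
        have deg_eq2: "card (nb E y) = 2" if "E y z" for y z
        proof -
          have "z \<in> nb E y" using that nbE by blast
          hence "card (nb E y) \<noteq> 0" using nbf[of y] by auto
          thus ?thesis using no1[of y] deg2[of y] by linarith
        qed
        have other: "\<exists>z'. nb E y = {z, z'} \<and> z' \<noteq> z" if "E y z" for y z
        proof -
          have zin: "z \<in> nb E y" using that nbE by blast
          have "card (nb E y - {z}) = 1" using deg_eq2[OF that] zin nbf by simp
          then obtain z' where z': "nb E y - {z} = {z'}" using card_1_singletonE by blast
          hence "nb E y = {z, z'}" using zin by blast
          moreover have "z' \<noteq> z" using z' by blast
          ultimately show ?thesis by blast
        qed
        obtain v a where va: "E v a" using xy0 by blast
        obtain a' where a': "nb E a = {v, a'}" "a' \<noteq> v" using other[OF sym[OF va]] by blast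
        have aa': "E a a'" using a' nbE by blast
        obtain x where x: "nb E a' = {a, x}" "x \<noteq> a" using other[OF sym[OF aa']] by blast
        have a'x: "E a' x" using x nbE by blast
        have vV: "v \<in> V" and aV: "a \<in> V" using inV[OF va] by auto
        have a'V: "a' \<in> V" and xV: "x \<in> V" using inV[OF a'x] by auto
        have av: "a \<noteq> v" using va irr by blast
        have aa'ne: "a' \<noteq> a" using aa' irr by blast
        have xa': "x \<noteq> a'" using a'x irr by blast
        have xv: "x \<noteq> v"
        proof
          assume "x = v"
          hence "E v a'" using sym a'x by blast
          thus False using tf va aa' vV aV a'V unfolding triangle_free_def by blast
        qed
        have va'n: "\<not> E a' v"
        proof
          assume "E a' v"
          hence "v \<in> nb E a'" using nbE by blast
          thus False using x(1) av xv by simp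
        qed
        let ?V1 = "V - {v}"
        let ?E1 = "rs E ?V1"
        have V1V: "?V1 \<subseteq> V" by blast
        have g1: "simple_graph ?V1 ?E1" using sg_rs[OF g V1V] .
        have nb1a: "nb ?E1 a = {a'}"
          using a' av aV a'V unfolding nb_def rs_def by auto
        have nb1a': "nb ?E1 a' = {a, x}"
          using x av xv aV xV a'V a'(2) unfolding nb_def rs_def by auto
        have E1aa': "?E1 a a'" using aa' av a'(2) aV a'V unfolding rs_def by simp
        have nI1: "\<not> (\<exists>M. induced_matching ?V1 ?E1 M \<and> card M = Suc t' + 1)"
          using noIM_sub[OF nI' V1V] .
        define X0 where "X0 = insert v (nb E v)"
        have cv: "card (nb E v) = 2" using deg_eq2[OF va] .
        have X0V: "X0 \<subseteq> V" using vV nbV unfolding X0_def by blast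
        have cX0: "card X0 = 3" unfolding X0_def using cv nbf xnb by simp
        have s1: "real (mis V E) \<le> real (mis ?V1 ?E1) + real (mis (V - X0) (rs E (V - X0)))"
          using mis_split[OF g, of v] unfolding X0_def by linarith
        have s2: "real (mis ?V1 ?E1) \<le> real (mis (?V1 - {a, a'}) (rs ?E1 (?V1 - {a, a'})))
           + real (mis (?V1 - {a', a, x}) (rs ?E1 (?V1 - {a', a, x})))"
          using mis_leaf[OF g1 nb1a] unfolding nb1a nb1a' by linarith
        have W1: "?V1 - {a, a'} = V - {v, a, a'}" by blast
        have W2: "?V1 - {a', a, x} = V - {v, a, a', x}" by blast
        have r1: "rs ?E1 (?V1 - {a, a'}) = rs E (V - {v, a, a'})"
          unfolding W1 by (rule rs_rs) blast
        have r2: "rs ?E1 (?V1 - {a', a, x}) = rs E (V - {v, a, a', x})"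
          unfolding W2 by (rule rs_rs) blast
        have nI2: "\<not> (\<exists>M. induced_matching (?V1 - {a', a, x}) (rs ?E1 (?V1 - {a', a, x})) M \<and> card M = t' + 1)"
          by (rule noIM_edge[OF g1 E1aa' _ nI1]) (use nb1a nb1a' in auto)
        have c3: "card {v, a, a'} = 3" using av aa'ne a'(2) by auto
        have c4: "card {v, a, a', x} = 4" using av aa'ne a'(2) xv x(2) xa' by auto
        have s3V: "{v, a, a'} \<subseteq> V" and s4V: "{v, a, a', x} \<subseteq> V" using vV aV a'V xV by auto
        have b0: "real (mis (V - X0) (rs E (V - X0))) \<le> bd (card V - 3) t"
          using IHk[OF X0V _ _ noIM_sub[OF nI, of "V - X0"], of 3] cX0 unfolding X0_def by auto
        have b1: "real (mis (V - {v, a, a'}) (rs E (V - {v, a, a'}))) \<le> bd (card V - 3) t"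
          using IHk[OF s3V _ _ noIM_sub[OF nI, of "V - {v, a, a'}"]] c3 by auto
        have b2: "real (mis (V - {v, a, a', x}) (rs E (V - {v, a, a', x}))) \<le> bd (card V - 4) t'"
          using IHk[OF s4V _ _ nI2[unfolded W2 r2[unfolded W2]]] c4 by auto
        have "4 \<le> card V" using card_mono[OF finV s4V] c4 by linarith
        then obtain m where m: "card V = m + 4" using le_Suc_ex by (metis add.commute)
        have "real (mis V E) \<le> bd (m + 1) (Suc t') + bd (m + 1) (Suc t') + bd m t'"
          using s1 s2[unfolded W1 W2 r1[unfolded W1] r2[unfolded W2]] b0 b1 b2 unfolding m t' by simp
        also have "\<dots> \<le> bd (card V) t" using A4[of m t'] m t' by simp
        finally show ?thesis .
      qed
    qed
  qed
qed


theorem mainTheorem2: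
  fixes V :: "'a set" and E :: "'a \<Rightarrow> 'a \<Rightarrow> bool" and n t :: nat
  assumes "simple_graph V E"
    and "card V = n" and "n \<ge> 1" and "2 * t \<le> n"
    and "triangle_free V E"
    and "\<not> (\<exists>M. induced_matching V E M \<and> card M = t + 1)"
  shows "real (mis V E) \<le> 2 ^ t * c_const ^ (n - 2 * t)"
proof -
  have "real (mis V E) \<le> bd (card V) t" using main[OF assms(1,5,6)] .
  thus ?thesis using bd_final[OF assms(4)] assms(2) by simp
qed

end
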